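(* Let $\Phi:\mathbb{R}\to\mathbb{R}$ be smooth, $\sigma\in\mathbb{R}$, and let $R,V\in C^1(\mathbb{R})\cap L^\infty(\mathbb{R})$ with $R(\varphi)\to r_\pm$ and $V(\varphi)\to v_\pm$ as $\varphi\to\pm\infty$ solve $$\sigma R'(\varphi)+V(\varphi+1)-V(\varphi)=0,\qquad \sigma V'(\varphi)+\Phi'(R(\varphi))-\Phi'(R(\varphi-1))=0\quad(\varphi\in\mathbb{R}).$$ Then $$\sigma[\![r]\!]+[\![v]\!]=0,\qquad \sigma[\![v]\!]+[\![\Phi'(r)]\!]=0,\qquad \sigma[\![\tfrac12 v^2+\Phi(r)]\!]+[\![\Phi'(r)v]\!]=0.$$
   Context: For an observable $\psi(r,v)$, $[\![\psi]\!]:=\psi(r_+,v_+)-\psi(r_-,v_-)$; e.g. $[\![r]\!]=r_+-r_-$, $[\![\Phi'(r)v]\!]=\Phi'(r_+)v_+-\Phi'(r_-)v_-$. *)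

theory Defs
  imports "HOL-Analysis.Analysis"
begin

definition smooth_real :: "(real \<Rightarrow> real) \<Rightarrow> bool" where
  "smooth_real f \<longleftrightarrow> (\<forall>n x. ((deriv ^^ n) f) differentiable (at x))"

definition C1_real :: "(real \<Rightarrow> real) \<Rightarrow> bool" where
  "C1_real f \<longleftrightarrow> (\<forall>x. f differentiable (at x)) \<and> continuous_on UNIV (deriv f)"

end

theory Submission
  imports Defs "HOL-Real_Asymp.Real_Asymp"
begin

lemma shift_top: "filterlim (\<lambda>x::real. x + c) at_top at_top"
  by real_asymp

lemma shift_bot: "filterlim (\<lambda>x::real. x + c) at_bot at_bot"
  by real_asymp

lemma avg_lim:
  fixes K k :: "real \<Rightarrow> real"
  assumes K: "\<And>x. (K has_real_derivative k x) (at x)"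
    and lim: "(k \<longlongrightarrow> c) F" and F: "F = at_top \<or> F = at_bot"
  shows "((\<lambda>x. K (x+1) - K x) \<longlongrightarrow> c) F"
proof -
  have "\<forall>x. \<exists>z. x < z \<and> z < x + 1 \<and> K (x+1) - K x = k z"
  proof
    fix x :: real
    from MVT2[of x "x+1" K k] K show "\<exists>z. x < z \<and> z < x + 1 \<and> K (x+1) - K x = k z"
      by auto
  qed
  then obtain \<xi> where xi: "\<And>x. x < \<xi> x \<and> \<xi> x < x + 1 \<and> K (x+1) - K x = k (\<xi> x)"
    by metis
  have "filterlim \<xi> F F"
    using F
  proof
    assume "F = at_top"
    then show ?thesis
      using filterlim_at_top_mono[OF filterlim_ident, of "\<xi>"] xi
      by (simp add: less_imp_le)
  next
    assume "F = at_bot"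
    then show ?thesis
      using filterlim_at_bot_mono[OF shift_bot[of 1], of \<xi>] xi
      by (simp add: less_imp_le)
  qed
  then have "((\<lambda>x. k (\<xi> x)) \<longlongrightarrow> c) F"
    using filterlim_compose[OF lim] by blast
  then show ?thesis using xi by simp
qed

lemma key:
  fixes F F' k :: "real \<Rightarrow> real"
  assumes dF: "\<And>x. (F has_real_derivative F' x) (at x)"
    and eq: "\<And>x. \<sigma> * F' x = k x - k (x+1)"
    and kc: "continuous_on UNIV k"
    and Fa: "(F \<longlongrightarrow> a) at_top" and Fb: "(F \<longlongrightarrow> b) at_bot"
    and kc1: "(k \<longlongrightarrow> c) at_top" and kd: "(k \<longlongrightarrow> d) at_bot"
  shows "\<sigma> * a + c = \<sigma> * b + d"
proof -
  have "\<exists>K. \<forall>x :: real. (-\<infinity>::ereal) < x \<longrightarrow> x < (\<infinity>::ereal) \<longrightarrow> (K has_vector_derivative k x) (at x)"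
    by (rule einterval_antiderivative) (use kc in \<open>auto simp: continuous_on_eq_continuous_at\<close>)
  then obtain K where K: "\<And>x. (K has_real_derivative k x) (at x)"
    by (auto simp: has_real_derivative_iff_has_vector_derivative)
  define M where "M x = \<sigma> * F x + (K (x+1) - K x)" for x
  have dM: "\<forall>x. (M has_real_derivative 0) (at x)"
  proof
    fix x
    have "(M has_real_derivative (\<sigma> * F' x + (k (x+1) * 1 - k x))) (at x)"
    proof -
      have K1: "((\<lambda>z. K (z+1)) has_real_derivative k (x+1) * 1) (at x)"
        by (rule DERIV_chain2[OF K]) (auto intro!: derivative_eq_intros)
      show ?thesis unfolding M_def
        by (intro DERIV_add DERIV_diff DERIV_cmult dF K K1)
    qed
    then show "(M has_real_derivative 0) (at x)" using eq[of x] by simp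
  qed
  have Mc: "M = (\<lambda>_. M 0)"
    using DERIV_isconst_all[OF dM] by auto
  have "(M \<longlongrightarrow> \<sigma> * a + c) at_top"
    unfolding M_def by (intro tendsto_intros Fa avg_lim[OF K kc1]) simp
  then have 1: "M 0 = \<sigma> * a + c"
    by (subst (asm) Mc) (simp add: tendsto_const_iff)
  have "(M \<longlongrightarrow> \<sigma> * b + d) at_bot"
    unfolding M_def by (intro tendsto_intros Fb avg_lim[OF K kd]) simp
  then have 2: "M 0 = \<sigma> * b + d"
    by (subst (asm) Mc) (simp add: tendsto_const_iff)
  show ?thesis using 1 2 by simp
qed

theorem lemma2p1:
  fixes \<Phi> R V :: "real \<Rightarrow> real" and \<sigma> r_p r_m v_p v_m :: real
  assumes "smooth_real \<Phi>"
    and "C1_real R" and "bounded (range R)"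
    and "C1_real V" and "bounded (range V)"
    and "(R \<longlongrightarrow> r_p) at_top" and "(R \<longlongrightarrow> r_m) at_bot"
    and "(V \<longlongrightarrow> v_p) at_top" and "(V \<longlongrightarrow> v_m) at_bot"
    and "\<And>\<phi>. \<sigma> * deriv R \<phi> + V (\<phi> + 1) - V \<phi> = 0"
    and "\<And>\<phi>. \<sigma> * deriv V \<phi> + deriv \<Phi> (R \<phi>) - deriv \<Phi> (R (\<phi> - 1)) = 0"
  shows "\<sigma> * (r_p - r_m) + (v_p - v_m) = 0 \<and>
           \<sigma> * (v_p - v_m) + (deriv \<Phi> r_p - deriv \<Phi> r_m) = 0 \<and>
           \<sigma> * ((v_p^2 / 2 + \<Phi> r_p) - (v_m^2 / 2 + \<Phi> r_m))
           + (deriv \<Phi> r_p * v_p - deriv \<Phi> r_m * v_m) = 0"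
proof -
  note A = assms
  have dR: "\<And>x. (R has_real_derivative deriv R x) (at x)"
    using A(2) by (simp add: C1_real_def DERIV_deriv_iff_real_differentiable)
  have dV: "\<And>x. (V has_real_derivative deriv V x) (at x)"
    using A(4) by (simp add: C1_real_def DERIV_deriv_iff_real_differentiable)
  have cR: "continuous_on UNIV R" and cV: "continuous_on UNIV V"
    using A(2,4) by (auto simp: C1_real_def continuous_on_eq_continuous_at differentiable_imp_continuous_within)
  have dP: "\<And>x. (\<Phi> has_real_derivative deriv \<Phi> x) (at x)"
    using A(1) unfolding smooth_real_def
    by (metis DERIV_deriv_iff_real_differentiable funpow_0)
  have "\<And>x. deriv \<Phi> differentiable (at x)"
    using A(1) unfolding smooth_real_def by (metis funpow_0 funpow_Suc_right o_apply One_nat_def)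
  then have cdP: "continuous_on UNIV (deriv \<Phi>)"
    by (auto simp: continuous_on_eq_continuous_at differentiable_imp_continuous_within)
  define g where "g x = deriv \<Phi> (R x)" for x
  have cg: "continuous_on UNIV g"
    unfolding g_def using continuous_on_compose2[OF cdP cR] by auto
  have cgs: "continuous_on UNIV (\<lambda>x. g (x - 1))"
  proof -
    have "continuous_on UNIV (\<lambda>x::real. x - 1)" by (intro continuous_intros)
    then show ?thesis using continuous_on_compose2[OF cg, of UNIV "\<lambda>x. x - 1"] by auto
  qed
  have gp: "((\<lambda>x. g (x - 1)) \<longlongrightarrow> deriv \<Phi> r_p) at_top"
  proof -
    have "((\<lambda>x. R (x + -1)) \<longlongrightarrow> r_p) at_top"
      using filterlim_compose[OF A(6) shift_top] .
    then have "((\<lambda>x. deriv \<Phi> (R (x + -1))) \<longlongrightarrow> deriv \<Phi> r_p) at_top"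
      using cdP by (intro continuous_on_tendsto_compose[OF cdP]) auto
    then show ?thesis by (simp add: g_def)
  qed
  have gm: "((\<lambda>x. g (x - 1)) \<longlongrightarrow> deriv \<Phi> r_m) at_bot"
  proof -
    have "((\<lambda>x. R (x + -1)) \<longlongrightarrow> r_m) at_bot"
      using filterlim_compose[OF A(7) shift_bot] .
    then have "((\<lambda>x. deriv \<Phi> (R (x + -1))) \<longlongrightarrow> deriv \<Phi> r_m) at_bot"
      using cdP by (intro continuous_on_tendsto_compose[OF cdP]) auto
    then show ?thesis by (simp add: g_def)
  qed
  have e1: "\<sigma> * r_p + v_p = \<sigma> * r_m + v_m"
    by (rule key[OF dR _ cV A(6,7,8,9)]) (use A(10) in \<open>simp add: algebra_simps\<close>)
  have e2: "\<sigma> * v_p + deriv \<Phi> r_p = \<sigma> * v_m + deriv \<Phi> r_m"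
    by (rule key[OF dV _ cgs A(8,9) gp gm]) (use A(11) in \<open>simp add: g_def algebra_simps\<close>)
  define E where "E x = (V x)^2/2 + \<Phi> (R x)" for x
  have dE: "\<And>x. (E has_real_derivative (V x * deriv V x + g x * deriv R x)) (at x)"
  proof -
    fix x
    have "((\<lambda>z. (V z)^2) has_real_derivative (real 2 * V x ^ (2 - 1) * deriv V x)) (at x)"
      using DERIV_mult[OF dV dV, of x] by (simp add: power2_eq_square mult.assoc)
    then have "((\<lambda>z. (V z)^2/2) has_real_derivative (real 2 * V x ^ (2 - 1) * deriv V x / 2)) (at x)"
      by (rule DERIV_cdivide)
    then have "(E has_real_derivative (real 2 * V x ^ (2 - 1) * deriv V x / 2 + deriv \<Phi> (R x) * deriv R x)) (at x)"
      unfolding E_def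
      by (intro DERIV_add DERIV_chain2[OF dP dR])
    then show "(E has_real_derivative (V x * deriv V x + g x * deriv R x)) (at x)"
      by (simp add: g_def)
  qed
  have cVg: "continuous_on UNIV (\<lambda>x. V x * g (x - 1))"
    by (intro continuous_intros cV cgs)
  have cP: "continuous_on UNIV \<Phi>"
    using dP by (auto simp: continuous_on_eq_continuous_at intro: DERIV_isCont)
  have PRp: "((\<lambda>x. \<Phi> (R x)) \<longlongrightarrow> \<Phi> r_p) at_top"
    using continuous_on_tendsto_compose[OF cP A(6)] by auto
  have PRm: "((\<lambda>x. \<Phi> (R x)) \<longlongrightarrow> \<Phi> r_m) at_bot"
    using continuous_on_tendsto_compose[OF cP A(7)] by auto
  have Ep: "(E \<longlongrightarrow> v_p^2/2 + \<Phi> r_p) at_top"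
    unfolding E_def
    by (intro tendsto_intros A(8) PRp) simp
  have Em: "(E \<longlongrightarrow> v_m^2/2 + \<Phi> r_m) at_bot"
    unfolding E_def
    by (intro tendsto_intros A(9) PRm) simp
  have e3: "\<sigma> * (v_p^2/2 + \<Phi> r_p) + v_p * deriv \<Phi> r_p = \<sigma> * (v_m^2/2 + \<Phi> r_m) + v_m * deriv \<Phi> r_m"
  proof (rule key[OF dE _ cVg Ep Em])
    fix x
    have a: "\<sigma> * deriv R x = V x - V (x+1)" using A(10)[of x] by simp
    have b: "\<sigma> * deriv V x = g (x-1) - g x" using A(11)[of x] by (simp add: g_def)
    show "\<sigma> * (V x * deriv V x + g x * deriv R x) = V x * g (x - 1) - V (x + 1) * g (x + 1 - 1)"
    proof -
      have "\<sigma> * (V x * deriv V x + g x * deriv R x) = V x * (\<sigma> * deriv V x) + g x * (\<sigma> * deriv R x)"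
        by (simp add: algebra_simps)
      also have "\<dots> = V x * (g (x-1) - g x) + g x * (V x - V (x+1))" by (simp only: a b)
      also have "\<dots> = V x * g (x - 1) - V (x + 1) * g (x + 1 - 1)" by (simp add: algebra_simps)
      finally show ?thesis .
    qed
  next
    show "((\<lambda>x. V x * g (x - 1)) \<longlongrightarrow> v_p * deriv \<Phi> r_p) at_top"
      by (intro tendsto_intros A(8) gp)
    show "((\<lambda>x. V x * g (x - 1)) \<longlongrightarrow> v_m * deriv \<Phi> r_m) at_bot"
      by (intro tendsto_intros A(9) gm)
  qed
  show ?thesis using e1 e2 e3 by (simp add: algebra_simps)
qed

end
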